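(* Let $c>0$ and $0<q_1<q_2\le 1$, and set $$\rho_1=\frac{\sin\frac{q_1\pi}{2}}{\sin\frac{(q_2-q_1)\pi}{2}},\qquad \rho_2=\frac{\sin\frac{q_2\pi}{2}}{\sin\frac{(q_2-q_1)\pi}{2}}.$$ Then $\rho_1>0$ and $\rho_2>1$. Consider the smooth parametric curve $\Gamma_{c,q_1,q_2}$ in the $(b,a)$-plane given by $$b(\omega)=\rho_1\omega^{q_2}-c\rho_2\omega^{-q_1},\qquad a(\omega)=c\rho_1\omega^{-q_2}-\rho_2\omega^{q_1},\qquad \omega>0.$$ Then $\Gamma_{c,q_1,q_2}$ is the graph of a smooth, decreasing, convex bijective function $a^\star=a^\star_{c,q_1,q_2}:\mathbb{R}\to\mathbb{R}$ (i.e. $a=a^\star(b)$), which satisfies $$a^\star(b)\le (-b)^{q_2/q_1}\,c^{\,1-q_2/q_1}\ \text{ if } b<0,\qquad a^\star(b)\le -b^{q_1/q_2}\ \text{ if } b\ge 0.$$ *)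

theory Defs
  imports "HOL-Analysis.Analysis"
begin

definition smooth_real :: "(real \<Rightarrow> real) \<Rightarrow> bool" where
  "smooth_real f \<longleftrightarrow> (\<forall>n. ((deriv ^^ n) f) differentiable_on UNIV)"

definition rho1 :: "real \<Rightarrow> real \<Rightarrow> real" where
  "rho1 q1 q2 = sin (q1 * pi / 2) / sin ((q2 - q1) * pi / 2)"

definition rho2 :: "real \<Rightarrow> real \<Rightarrow> real" where
  "rho2 q1 q2 = sin (q2 * pi / 2) / sin ((q2 - q1) * pi / 2)"

definition curve_b :: "real \<Rightarrow> real \<Rightarrow> real \<Rightarrow> real \<Rightarrow> real" where
  "curve_b c q1 q2 \<omega> = rho1 q1 q2 * \<omega> powr q2 - c * rho2 q1 q2 * \<omega> powr (- q1)"

definition curve_a :: "real \<Rightarrow> real \<Rightarrow> real \<Rightarrow> real \<Rightarrow> real" where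
  "curve_a c q1 q2 \<omega> = c * rho1 q1 q2 * \<omega> powr (- q2) - rho2 q1 q2 * \<omega> powr q1"

end

theory Submission
  imports Defs
begin

lemma sin_concave:
  fixes t y :: real
  assumes "0 \<le> t" "t \<le> 1" "0 \<le> y" "y \<le> pi"
  shows "t * sin y \<le> sin (t * y)"
proof -
  have cv: "convex_on {0..pi} (\<lambda>x. - sin x)"
  proof (rule convex_on_realI[where f'="\<lambda>x. - cos x"])
    show "connected {0..pi::real}" by simp
    show "((\<lambda>x. - sin x) has_real_derivative - cos x) (at x)" for x :: real
      by (auto intro!: derivative_eq_intros)
    show "- cos x \<le> - cos y" if "x \<in> {0..pi}" "y \<in> {0..pi}" "x \<le> y" for x y :: real
      using that cos_mono_le_eq[of y x] by auto
  qed
  have "- sin ((1 - t) *\<^sub>R 0 + t *\<^sub>R y) \<le> (1 - t) * (- sin 0) + t * (- sin y)"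
    using convex_onD[OF cv, of t 0 y] assms by auto
  then show ?thesis by simp
qed

lemma rho_facts:
  fixes q1 q2 :: real
  assumes "0 < q1" "q1 < q2" "q2 \<le> 1"
  shows "rho1 q1 q2 > 0" "rho2 q1 q2 > 1"
    "rho2 q1 q2 * (q1 / q2) \<le> rho1 q1 q2"
    "rho2 q1 q2 * (1 - q1 / q2) \<le> (rho2 q1 q2)\<^sup>2 - (rho1 q1 q2)\<^sup>2"
proof -
  define al where "al = q1 * pi / 2"
  define be where "be = q2 * pi / 2"
  define s where "s = sin ((q2 - q1) * pi / 2)"
  have sdef: "s = sin (be - al)" unfolding s_def al_def be_def by (simp add: diff_divide_distrib algebra_simps)
  have al: "0 < al" "al < be" "be \<le> pi/2" using assms by (auto simp: al_def be_def)
  have spos: "s > 0" unfolding sdef using al by (intro sin_gt_zero) auto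
  have sa: "sin al > 0" using al by (intro sin_gt_zero) auto
  have sb: "sin be > s" unfolding sdef using al by (subst sin_mono_less_eq) auto
  have r1: "rho1 q1 q2 = sin al / s" unfolding rho1_def al_def s_def by simp
  have r2: "rho2 q1 q2 = sin be / s" unfolding rho2_def be_def s_def by simp
  show "rho1 q1 q2 > 0" using r1 sa spos by simp
  show "rho2 q1 q2 > 1" using r2 sb spos by simp
  have rq: "q1 / q2 = al / be" unfolding al_def be_def by simp
  have "(al / be) * sin be \<le> sin ((al/be) * be)"
    using al by (intro sin_concave) auto
  then have "(q1/q2) * sin be \<le> sin al" using al rq by simp
  then show "rho2 q1 q2 * (q1 / q2) \<le> rho1 q1 q2" unfolding r1 r2 using spos
    by (metis divide_right_mono less_eq_real_def times_divide_eq_left times_divide_eq_right divide_divide_eq_left mult.commute)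
  have ca: "cos al \<ge> 1 - q1"
  proof -
    have "(1 - q1) * sin (pi/2) \<le> sin ((1 - q1) * (pi/2))"
      using assms by (intro sin_concave) auto
    also have "(1 - q1) * (pi/2) = pi/2 - al" unfolding al_def by (simp add: field_simps)
    finally show ?thesis by (simp add: sin_cos_eq)
  qed
  have "1 - q1/q2 \<le> 1 - q1" using assms by (simp add: le_divide_eq)
  hence ca2: "cos al \<ge> 1 - q1/q2" using ca by linarith
  have cb: "cos be \<ge> 0" using al by (intro cos_ge_zero) auto
  have ident: "(sin be)\<^sup>2 - (sin al)\<^sup>2 = sin (be - al) * sin (be + al)"
  proof -
    have "sin (be - al) * sin (be + al) = (sin be * cos al)^2 - (cos be * sin al)^2"
      by (simp add: sin_add sin_diff power2_eq_square algebra_simps)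
    also have "\<dots> = (sin be)\<^sup>2 * (1 - (sin al)\<^sup>2) - (1 - (sin be)\<^sup>2) * (sin al)\<^sup>2"
      by (simp add: power_mult_distrib cos_squared_eq)
    finally show ?thesis by (simp add: algebra_simps)
  qed
  have "sin (be + al) \<ge> sin be * (1 - q1/q2)"
  proof -
    have "sin be * (1 - q1/q2) \<le> sin be * cos al" using ca2 sb spos by (intro mult_left_mono) auto
    also have "\<dots> \<le> sin be * cos al + cos be * sin al" using cb sa by simp
    finally show ?thesis by (simp add: sin_add)
  qed
  then have H: "s * (sin be * (1 - q1/q2)) \<le> (sin be)\<^sup>2 - (sin al)\<^sup>2"
    unfolding ident sdef[symmetric] using spos by (intro mult_left_mono) auto
  have eq1: "rho2 q1 q2 * (1 - q1/q2) = (s * (sin be * (1 - q1/q2))) / s^2"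
    using spos by (simp add: r2 power2_eq_square)
  have eq2: "(rho2 q1 q2)\<^sup>2 - (rho1 q1 q2)\<^sup>2 = ((sin be)\<^sup>2 - (sin al)\<^sup>2) / s^2"
    by (simp add: r1 r2 power_divide diff_divide_distrib)
  show "rho2 q1 q2 * (1 - q1 / q2) \<le> (rho2 q1 q2)\<^sup>2 - (rho1 q1 q2)\<^sup>2"
    unfolding eq1 eq2 using H by (intro divide_right_mono) auto
qed

lemma young1: fixes f r :: real assumes "0 \<le> f" "0 \<le> r" "r \<le> 1"
  shows "f powr r \<le> r * f + (1 - r)"
proof (cases "f = 0")
  case True then show ?thesis using assms by simp
next
  case False
  then have "f powr r * 1 powr (1 - r) \<le> r * f + (1 - r) * 1"
    using assms by (intro Youngs_inequality_0) auto
  then show ?thesis by simp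
qed

lemma core1:
  fixes r1 r2 r e :: real
  assumes "r1 > 0" "r2 > 0" "0 < r" "r \<le> 1"
    and h1: "r2 * r \<le> r1" and h2: "r2 * (1 - r) \<le> r2\<^sup>2 - r1\<^sup>2"
    and d: "r2 - r1 * e > 0"
  shows "r1 - r2 * e \<le> (r2 - r1 * e) powr (1 / r)"
proof -
  define d where "d = r2 - r1 * e"
  define f where "f = d powr (1/r)"
  have f0: "f \<ge> 0" unfolding f_def by simp
  have "f powr r = d" unfolding f_def using assms d_def by (simp add: powr_powr)
  then have "d \<le> r * f + (1 - r)" using young1[OF f0, of r] assms by simp
  then have "r2 * d \<le> r2 * (r * f + (1 - r))" using assms by (intro mult_left_mono) auto
  also have "\<dots> = (r2 * r) * f + r2 * (1 - r)" by (simp add: algebra_simps)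
  also have "\<dots> \<le> r1 * f + (r2\<^sup>2 - r1\<^sup>2)" using h1 h2 f0
    by (intro add_mono mult_right_mono) auto
  finally have "r1 * (r1 - r2 * e) \<le> r1 * f" unfolding d_def
    by (simp add: power2_eq_square algebra_simps)
  then show ?thesis using assms unfolding f_def d_def by simp
qed

lemma core2:
  fixes r1 r2 r e :: real
  assumes "r1 > 0" "r2 > 0" "0 < r" "r \<le> 1"
    and h1: "r2 * r \<le> r1" and h2: "r2 * (1 - r) \<le> r2\<^sup>2 - r1\<^sup>2"
    and f: "r1 - r2 * e \<ge> 0"
  shows "(r1 - r2 * e) powr r \<le> r2 - r1 * e"
proof -
  define f where "f = r1 - r2 * e"
  have "f powr r \<le> r * f + (1 - r)" using young1[of f r] assms f_def by simp
  then have "r2 * f powr r \<le> r2 * (r * f + (1 - r))" using assms by (intro mult_left_mono) auto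
  also have "\<dots> = (r2 * r) * f + r2 * (1 - r)" by (simp add: algebra_simps)
  also have "\<dots> \<le> r1 * f + (r2\<^sup>2 - r1\<^sup>2)" using h1 h2 f f_def
    by (intro add_mono mult_right_mono) auto
  also have "\<dots> = r2 * (r2 - r1 * e)" unfolding f_def by (simp add: power2_eq_square algebra_simps)
  finally show ?thesis using assms unfolding f_def by simp
qed

lemma gfun_deriv:
  fixes P Q al be w :: real
  assumes "w > 0"
  shows "((\<lambda>w. P * w powr al - Q * w powr (-be)) has_real_derivative
     P * al * w powr (al - 1) + Q * be * w powr (-be - 1)) (at w)"
proof -
  have "((\<lambda>w. P * w powr al - Q * w powr (-be)) has_real_derivative
     P * (al * w powr (al - 1)) - Q * (-be * w powr (-be - 1))) (at w)"
    using assms by (intro DERIV_diff DERIV_cmult has_real_derivative_powr)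
  then show ?thesis by (simp add: algebra_simps)
qed

lemma gfun_mono:
  fixes P Q al be :: real
  assumes "P > 0" "Q > 0" "al > 0" "be > 0" "0 < x" "x < y"
  shows "P * x powr al - Q * x powr (-be) < P * y powr al - Q * y powr (-be)"
proof -
  have "x powr al < y powr al" using assms by (intro powr_less_mono2) auto
  moreover have "y powr (-be) < x powr (-be)" using assms by (intro powr_less_mono2_neg) auto
  ultimately show ?thesis using assms by (smt (verit) mult_strict_left_mono)
qed

lemma gfun_surj:
  fixes P Q al be y :: real
  assumes "P > 0" "Q > 0" "al > 0" "be > 0"
  shows "\<exists>w>0. P * w powr al - Q * w powr (-be) = y"
proof -
  define g where "g = (\<lambda>w::real. P * w powr al - Q * w powr (-be))"
  define B2 where "B2 = (\<bar>y\<bar> + Q) / P + 1"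
  define w2 where "w2 = B2 powr (1/al)"
  have B2: "B2 \<ge> 1" unfolding B2_def using assms by simp
  have w2a: "w2 powr al = B2" unfolding w2_def using assms B2 by (simp add: powr_powr)
  have w21: "w2 \<ge> 1" unfolding w2_def using B2 assms by (intro ge_one_powr_ge_zero) auto
  have "w2 powr (-be) \<le> 1 powr (-be)" using w21 assms by (intro powr_mono2') auto
  then have "w2 powr (-be) \<le> 1" by simp
  then have "Q * w2 powr (-be) \<le> Q" using assms by simp
  moreover have "P * B2 = \<bar>y\<bar> + Q + P" unfolding B2_def using assms by (simp add: field_simps)
  ultimately have g2: "y \<le> g w2" unfolding g_def w2a using abs_ge_self[of y] assms by linarith
  define B1 where "B1 = (\<bar>y\<bar> + P) / Q + 1"
  define w1 where "w1 = B1 powr (- 1/be)"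
  have B1: "B1 \<ge> 1" unfolding B1_def using assms by simp
  have w1pos: "w1 > 0" unfolding w1_def using B1 by simp
  have w1b: "w1 powr (-be) = B1" unfolding w1_def using assms B1 by (simp add: powr_powr)
  have "w1 \<le> 1 powr (-1/be)" unfolding w1_def using B1 assms by (intro powr_mono2') auto
  then have w11: "w1 \<le> 1" by simp
  have "w1 powr al \<le> 1" using w11 w1pos assms by (intro powr_le1) auto
  then have "P * w1 powr al \<le> P" using assms by simp
  moreover have "Q * B1 = \<bar>y\<bar> + P + Q" unfolding B1_def using assms by (simp add: field_simps)
  ultimately have g1: "g w1 \<le> y" unfolding g_def w1b using abs_ge_minus_self[of y] assms by linarith
  have cont: "continuous_on {w1..w2} g"
  proof (intro continuous_at_imp_continuous_on ballI)
    fix x assume "x \<in> {w1..w2}"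
    then have "x > 0" using w1pos by auto
    then show "isCont g x" unfolding g_def by (rule DERIV_isCont[OF gfun_deriv])
  qed
  obtain w where "w1 \<le> w" "w \<le> w2" "g w = y"
    using IVT'[of g w1 y w2, OF g1 g2 _ cont] w11 w21 by auto
  then show ?thesis using w1pos unfolding g_def by (intro exI[of _ w]) auto
qed

inductive sm :: "(real \<Rightarrow> real) \<Rightarrow> bool" where
  sm_const: "sm (\<lambda>x. k)"
| sm_pow: "sm (\<lambda>x. x powr p)"
| sm_add: "sm f \<Longrightarrow> sm g \<Longrightarrow> sm (\<lambda>x. f x + g x)"
| sm_mul: "sm f \<Longrightarrow> sm g \<Longrightarrow> sm (\<lambda>x. f x * g x)"
| sm_inv: "sm f \<Longrightarrow> (\<forall>x>0. f x \<noteq> 0) \<Longrightarrow> sm (\<lambda>x. inverse (f x))"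

lemma sm_cong: "sm f \<Longrightarrow> (\<And>x. f x = g x) \<Longrightarrow> sm g"
proof -
  assume "sm f" "\<And>x. f x = g x"
  then have "f = g" by auto
  with \<open>sm f\<close> show ?thesis by simp
qed

lemma sm_deriv: "sm f \<Longrightarrow> \<exists>g. sm g \<and> (\<forall>x>0. (f has_real_derivative g x) (at x))"
proof (induction rule: sm.induct)
  case (sm_const k)
  then show ?case by (intro exI[of _ "\<lambda>x. 0"]) (auto intro: sm.intros)
next
  case (sm_pow p)
  have "sm (\<lambda>x. p * x powr (p - 1))" by (intro sm.intros)
  then show ?case by (intro exI[of _ "\<lambda>x. p * x powr (p - 1)"]) (auto intro: has_real_derivative_powr)
next
  case (sm_add f g)
  then obtain f' g' where "sm f'" "sm g'" "\<forall>x>0. (f has_real_derivative f' x) (at x)"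
     "\<forall>x>0. (g has_real_derivative g' x) (at x)" by blast
  then show ?case by (intro exI[of _ "\<lambda>x. f' x + g' x"]) (auto intro: sm.intros DERIV_add)
next
  case (sm_mul f g)
  then obtain f' g' where "sm f'" "sm g'" "\<forall>x>0. (f has_real_derivative f' x) (at x)"
     "\<forall>x>0. (g has_real_derivative g' x) (at x)" by blast
  moreover have "sm (\<lambda>x. f' x * g x + g' x * f x)"
    using calculation sm_mul by (intro sm.intros) auto
  moreover have "\<forall>x>0. ((\<lambda>x. f x * g x) has_real_derivative f' x * g x + g' x * f x) (at x)"
    using calculation by (auto intro: DERIV_mult)
  ultimately show ?case by blast
next
  case (sm_inv f)
  then obtain f' where f': "sm f'" "\<forall>x>0. (f has_real_derivative f' x) (at x)" by blast
  have "sm (\<lambda>x. (-1) * f' x * (inverse (f x) * inverse (f x)))"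
    using f' sm_inv by (intro sm.intros) auto
  then have "sm (\<lambda>x. - (f' x * inverse (f x ^ Suc (Suc 0))))"
    by (rule sm_cong) (simp add: power2_eq_square inverse_mult_distrib)
  moreover have "\<forall>x>0. ((\<lambda>x. inverse (f x)) has_real_derivative - (f' x * inverse (f x ^ Suc (Suc 0)))) (at x)"
  proof (intro allI impI)
    fix x :: real assume "x > 0"
    then show "((\<lambda>x. inverse (f x)) has_real_derivative - (f' x * inverse (f x ^ Suc (Suc 0)))) (at x)"
      using f' sm_inv by (intro DERIV_inverse_fun) auto
  qed
  ultimately show ?case by blast
qed

lemma aux_div: fixes a b D :: real shows "(- a - b) / D = - ((a + b) / D)"
  by (metis minus_add_distrib minus_divide_left diff_conv_add_uminus)

lemma R_mono:
  fixes r1 r2 c q1 q2 s t :: real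
  assumes "r1 > 0" "r2 > 0" "c > 0" "0 < q1" "q1 < q2" and h: "q1 * r2 \<le> q2 * r1"
    and st: "0 < s" "s \<le> t"
  shows "- (r2 * q1 * s powr (q1 - 1) + c * r1 * q2 * s powr (- q2 - 1)) / (r1 * q2 * s powr (q2 - 1) + c * r2 * q1 * s powr (- q1 - 1))
       \<le> - (r2 * q1 * t powr (q1 - 1) + c * r1 * q2 * t powr (- q2 - 1)) / (r1 * q2 * t powr (q2 - 1) + c * r2 * q1 * t powr (- q1 - 1))"
proof -
  define M where "M = (\<lambda>z::real. (c * r1 * q2 + r2 * q1 * z) / (r1 * q2 * z + c * r2 * q1))"
  have form: "- (r2 * q1 * w powr (q1 - 1) + c * r1 * q2 * w powr (- q2 - 1)) / (r1 * q2 * w powr (q2 - 1) + c * r2 * q1 * w powr (- q1 - 1))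
     = - (w powr (q1 - q2) * M (w powr (q1 + q2)))" if w: "w > 0" for w :: real
  proof -
    have e1: "w powr (q1 - 1) = w powr (-q2 - 1) * w powr (q1 + q2)"
      by (simp add: powr_add[symmetric])
    have e2: "w powr (q2 - 1) = w powr (-q1 - 1) * w powr (q1 + q2)"
      by (simp add: powr_add[symmetric])
    have e3: "w powr (q1 - q2) = w powr (-q2 - 1) / w powr (-q1 - 1)"
      by (simp add: powr_diff[symmetric])
    have pz: "w powr (-q1 - 1) > 0" "w powr (-q2-1) > 0" "w powr (q1+q2) > 0" using w by auto
    have dpos: "r1 * q2 * w powr (q1 + q2) + c * r2 * q1 > 0" using pz assms by (simp add: add_pos_pos)
    show ?thesis unfolding M_def e1 e2 e3 using pz dpos
      by (simp add: field_simps) (rule aux_div)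
  qed
  have Mmono: "M z2 \<le> M z1" if z: "0 \<le> z1" "z1 \<le> z2" for z1 z2
  proof -
    have D1: "r1 * q2 * z1 + c * r2 * q1 > 0" using z assms by (simp add: add_nonneg_pos)
    have D2: "r1 * q2 * z2 + c * r2 * q1 > 0" using z assms by (simp add: add_nonneg_pos)
    have sq: "(q1*r2)^2 \<le> (q2*r1)^2" using h assms by (intro power_mono) auto
    have "0 \<le> c * (z2 - z1) * ((q2*r1)^2 - (q1*r2)^2)" using sq z assms by simp
    also have "\<dots> = (c * r1 * q2 + r2 * q1 * z1) * (r1 * q2 * z2 + c * r2 * q1)
        - (c * r1 * q2 + r2 * q1 * z2) * (r1 * q2 * z1 + c * r2 * q1)"
      by (simp add: power2_eq_square algebra_simps)
    finally show ?thesis unfolding M_def using D1 D2 by (simp add: divide_le_eq le_divide_eq field_simps)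
  qed
  have t0: "t > 0" using st by simp
  have p1: "t powr (q1 - q2) \<le> s powr (q1 - q2)" using st assms by (intro powr_mono2') auto
  have p2: "s powr (q1 + q2) \<le> t powr (q1 + q2)" using st assms by (intro powr_mono2) auto
  have M0: "M z \<ge> 0" if "z \<ge> 0" for z unfolding M_def using that assms
    by (intro divide_nonneg_nonneg add_nonneg_nonneg) auto
  have "M (t powr (q1 + q2)) \<le> M (s powr (q1 + q2))" using p2 by (intro Mmono) auto
  then have "t powr (q1 - q2) * M (t powr (q1 + q2)) \<le> s powr (q1 - q2) * M (s powr (q1 + q2))"
    using p1 M0 by (intro mult_mono) auto
  then show ?thesis using form[of s] form[of t] st t0 by simp
qed


lemma bound_neg:
  fixes r1 r2 c q1 q2 w :: real
  assumes "r1 > 0" "r2 > 0" "c > 0" "0 < q1" "q1 < q2" "w > 0"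
    and h1: "r2 * (q1/q2) \<le> r1" and h2: "r2 * (1 - q1/q2) \<le> r2\<^sup>2 - r1\<^sup>2"
    and bneg: "r1 * w powr q2 - c * r2 * w powr (- q1) < 0"
  shows "c * r1 * w powr (- q2) - r2 * w powr q1
     \<le> (- (r1 * w powr q2 - c * r2 * w powr (- q1))) powr (q2 / q1) * c powr (1 - q2 / q1)"
proof -
  define W where "W = w powr (q1 + q2)"
  define e where "e = W / c"
  have W1: "w powr q2 = w powr (-q1) * W" unfolding W_def by (simp add: powr_add[symmetric])
  have W2: "w powr q1 = w powr (-q2) * W" unfolding W_def by (simp add: powr_add[symmetric])
  have Bf: "- (r1 * w powr q2 - c * r2 * w powr (- q1)) = w powr (-q1) * c * (r2 - r1 * e)"
    unfolding W1 e_def using assms by (simp add: field_simps)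
  have Af: "c * r1 * w powr (- q2) - r2 * w powr q1 = w powr (-q2) * c * (r1 - r2 * e)"
    unfolding W2 e_def using assms by (simp add: field_simps)
  have dpos: "r2 - r1 * e > 0"
  proof -
    have "0 < w powr (-q1) * c * (r2 - r1 * e)" using bneg Bf by linarith
    moreover have "w powr (-q1) * c > 0" using assms by simp
    ultimately show ?thesis by (simp add: zero_less_mult_iff)
  qed
  have c1: "r1 - r2 * e \<le> (r2 - r1 * e) powr (1 / (q1/q2))"
    using assms dpos by (intro core1) auto
  have "(- (r1 * w powr q2 - c * r2 * w powr (- q1))) powr (q2 / q1) * c powr (1 - q2 / q1)
      = (w powr (-q1)) powr (q2/q1) * (c powr (q2/q1) * c powr (1 - q2/q1)) * (r2 - r1 * e) powr (q2/q1)"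
    unfolding Bf using dpos assms by (simp add: powr_mult)
  also have "(w powr (-q1)) powr (q2/q1) = w powr (-q2)" using assms by (simp add: powr_powr)
  also have "c powr (q2/q1) * c powr (1 - q2/q1) = c" using assms by (simp add: powr_add[symmetric])
  finally have R: "(- (r1 * w powr q2 - c * r2 * w powr (- q1))) powr (q2 / q1) * c powr (1 - q2 / q1)
      = w powr (-q2) * c * (r2 - r1 * e) powr (q2/q1)" .
  have "w powr (-q2) * c * (r1 - r2 * e) \<le> w powr (-q2) * c * (r2 - r1 * e) powr (q2/q1)"
    using c1 assms by (intro mult_left_mono) auto
  then show ?thesis unfolding Af R .
qed

lemma bound_pos:
  fixes r1 r2 c q1 q2 w :: real
  assumes "r1 > 0" "r2 > 0" "c > 0" "0 < q1" "q1 < q2" "w > 0"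
    and h1: "r2 * (q1/q2) \<le> r1" and h2: "r2 * (1 - q1/q2) \<le> r2\<^sup>2 - r1\<^sup>2"
    and bpos: "r1 * w powr q2 - c * r2 * w powr (- q1) \<ge> 0"
  shows "c * r1 * w powr (- q2) - r2 * w powr q1
     \<le> - ((r1 * w powr q2 - c * r2 * w powr (- q1)) powr (q1 / q2))"
proof -
  define W where "W = w powr (q1 + q2)"
  define e where "e = c / W"
  have Wp: "W > 0" unfolding W_def using assms by simp
  have W1: "w powr (-q1) = w powr q2 / W" unfolding W_def by (simp add: powr_diff[symmetric])
  have W2: "w powr (-q2) = w powr q1 / W" unfolding W_def by (simp add: powr_diff[symmetric])
  have Bf: "r1 * w powr q2 - c * r2 * w powr (- q1) = w powr q2 * (r1 - r2 * e)"
    unfolding W1 e_def using Wp by (simp add: field_simps)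
  have Af: "c * r1 * w powr (- q2) - r2 * w powr q1 = - (w powr q1 * (r2 - r1 * e))"
    unfolding W2 e_def using Wp by (simp add: field_simps)
  have fpos: "r1 - r2 * e \<ge> 0"
  proof -
    have "0 \<le> w powr q2 * (r1 - r2 * e)" using bpos Bf by linarith
    then show ?thesis using assms by (simp add: zero_le_mult_iff)
  qed
  have c2: "(r1 - r2 * e) powr (q1/q2) \<le> r2 - r1 * e"
    using assms fpos by (intro core2) auto
  have "(r1 * w powr q2 - c * r2 * w powr (- q1)) powr (q1 / q2)
      = (w powr q2) powr (q1/q2) * (r1 - r2 * e) powr (q1/q2)"
    unfolding Bf using fpos assms by (simp add: powr_mult)
  also have "(w powr q2) powr (q1/q2) = w powr q1" using assms by (simp add: powr_powr)
  finally have R: "(r1 * w powr q2 - c * r2 * w powr (- q1)) powr (q1 / q2) = w powr q1 * (r1 - r2 * e) powr (q1/q2)" .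
  have "w powr q1 * (r1 - r2 * e) powr (q1/q2) \<le> w powr q1 * (r2 - r1 * e)"
    using c2 assms by (intro mult_left_mono) auto
  then show ?thesis unfolding Af R by simp
qed


theorem lemma1:
  fixes c q1 q2 :: real
  assumes "c > 0" and "0 < q1" and "q1 < q2" and "q2 \<le> 1"
  shows "rho1 q1 q2 > 0 \<and> rho2 q1 q2 > 1 \<and>
    (\<exists>A :: real \<Rightarrow> real.
       {(curve_b c q1 q2 \<omega>, curve_a c q1 q2 \<omega>) | \<omega>. \<omega> > 0} = {(x, A x) | x. True}
     \<and> smooth_real A
     \<and> (\<forall>x y. x < y \<longrightarrow> A y < A x)
     \<and> convex_on UNIV A
     \<and> bij A
     \<and> (\<forall>b. b < 0 \<longrightarrow> A b \<le> (- b) powr (q2 / q1) * c powr (1 - q2 / q1))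
     \<and> (\<forall>b. b \<ge> 0 \<longrightarrow> A b \<le> - (b powr (q1 / q2))))"
proof -
  let ?r1 = "rho1 q1 q2" and ?r2 = "rho2 q1 q2"
  let ?B = "curve_b c q1 q2" and ?Aa = "curve_a c q1 q2"
  have r1: "?r1 > 0" and r2: "?r2 > 1" and h1: "?r2 * (q1/q2) \<le> ?r1"
    and h2: "?r2 * (1 - q1/q2) \<le> ?r2\<^sup>2 - ?r1\<^sup>2"
    using rho_facts[of q1 q2] assms by auto
  have r2p: "?r2 > 0" using r2 by simp
  have Bf: "?B w = ?r1 * w powr q2 - (c * ?r2) * w powr (- q1)" for w
    unfolding curve_b_def by simp
  have Af: "?Aa w = - (?r2 * w powr q1 - (c * ?r1) * w powr (- q2))" for w
    unfolding curve_a_def by simp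
  have Bmono: "?B x < ?B y" if "0 < x" "x < y" for x y
    unfolding Bf using that assms r1 r2p by (intro gfun_mono) auto
  have Amono: "?Aa y < ?Aa x" if "0 < x" "x < y" for x y
    unfolding Af using gfun_mono[of ?r2 "c * ?r1" q1 q2 x y] that assms r1 r2p by auto
  have Bsurj: "\<exists>w>0. ?B w = y" for y
    unfolding Bf using assms r1 r2p by (intro gfun_surj) auto
  have Asurj: "\<exists>w>0. ?Aa w = y" for y
    using gfun_surj[of ?r2 "c * ?r1" q1 q2 "-y"] assms r1 r2p unfolding Af by auto
  define B' where "B' = (\<lambda>w. ?r1 * q2 * w powr (q2 - 1) + (c * ?r2) * q1 * w powr (- q1 - 1))"
  define A' where "A' = (\<lambda>w. - (?r2 * q1 * w powr (q1 - 1) + (c * ?r1) * q2 * w powr (- q2 - 1)))"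
  have Bder: "(?B has_real_derivative B' w) (at w)" if "w > 0" for w
  proof -
    have "?B = (\<lambda>w. ?r1 * w powr q2 - (c * ?r2) * w powr (- q1))" using Bf by auto
    then show ?thesis unfolding B'_def using gfun_deriv[OF that] by simp
  qed
  have Ader: "(?Aa has_real_derivative A' w) (at w)" if "w > 0" for w
  proof -
    have "?Aa = (\<lambda>w. - (?r2 * w powr q1 - (c * ?r1) * w powr (- q2)))" using Af by auto
    then show ?thesis unfolding A'_def using DERIV_minus[OF gfun_deriv[OF that]] by simp
  qed
  have B'pos: "B' w > 0" if "w > 0" for w
    unfolding B'_def using that assms r1 r2p by (intro add_pos_pos) auto
  have Bcont: "isCont ?B w" if "w > 0" for w using Bder[OF that] by (rule DERIV_isCont)
  have Buniq: "x = y" if "0 < x" "0 < y" "?B x = ?B y" for x y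
    using Bmono[of x y] Bmono[of y x] that by (cases x y rule: linorder_cases) auto
  define binv where "binv = (\<lambda>x. THE w. 0 < w \<and> ?B w = x)"
  have binv: "0 < binv x \<and> ?B (binv x) = x" for x
  proof -
    have "\<exists>!w. 0 < w \<and> ?B w = x" using Bsurj[of x] Buniq by blast
    then show ?thesis unfolding binv_def by (rule theI')
  qed
  have binvB: "binv (?B w) = w" if "w > 0" for w
    using binv[of "?B w"] Buniq that by blast
  have binv_mono: "binv x < binv y" if "x < y" for x y
  proof (rule ccontr)
    assume "\<not> binv x < binv y"
    then have "binv y \<le> binv x" by simp
    then have "?B (binv y) \<le> ?B (binv x)"
      using Bmono[of "binv y" "binv x"] binv[of y] by (cases "binv y = binv x") auto
    then show False using binv[of x] binv[of y] that by simp
  qed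
  have binv_cont: "isCont binv x" for x
  proof -
    define w where "w = binv x"
    have w: "w > 0" "?B w = x" using binv[of x] w_def by auto
    have "isCont binv (?B w)"
    proof (rule isCont_inverse_function[where d = "w/2" and f = ?B and x = w])
      show "0 < w/2" using w by simp
      show "binv (?B z) = z" if "\<bar>z - w\<bar> \<le> w/2" for z
      proof -
        have "z > 0" using that w(1) abs_le_iff[of "z - w" "w/2"] by linarith
        then show "binv (?B z) = z" by (rule binvB)
      qed
      show "isCont ?B z" if "\<bar>z - w\<bar> \<le> w/2" for z
      proof -
        have "z > 0" using that w(1) abs_le_iff[of "z - w" "w/2"] by linarith
        then show "isCont ?B z" by (rule Bcont)
      qed
    qed
    then show ?thesis using w by simp
  qed
  have binv_der: "(binv has_real_derivative inverse (B' (binv x))) (at x)" for x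
  proof (rule DERIV_inverse_function[where f = ?B and a = "x - 1" and b = "x + 1"])
    show "(?B has_real_derivative B' (binv x)) (at (binv x))" using binv[of x] by (intro Bder) auto
    show "B' (binv x) \<noteq> 0" using B'pos binv[of x] by (metis less_irrefl)
    show "x - 1 < x" "x < x + 1" by auto
    show "?B (binv y) = y" for y using binv by blast
    show "isCont binv x" by (rule binv_cont)
  qed
  define A where "A = (\<lambda>x. ?Aa (binv x))"
  have comp_der: "((\<lambda>x. g (binv x)) has_real_derivative g' (binv x) * inverse (B' (binv x))) (at x)"
    if "\<forall>w>0. (g has_real_derivative g' w) (at w)" for g g' x
    using that binv[of x] by (intro DERIV_chain2[OF _ binv_der]) auto
  have smB': "sm B'"
  proof -
    have "sm (\<lambda>w. (\<lambda>w. ?r1 * q2 * w powr (q2 - 1)) w + (\<lambda>w. (c * ?r2) * q1 * w powr (- q1 - 1)) w)"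
      by (intro sm.intros)
    then show ?thesis unfolding B'_def by simp
  qed
  have smA: "sm ?Aa"
  proof -
    have "sm (\<lambda>w. (\<lambda>w. (c * ?r1) * w powr (- q2)) w + (\<lambda>w. (- ?r2) * w powr q1) w)"
      by (intro sm.intros)
    then show ?thesis by (rule sm_cong) (simp add: curve_a_def)
  qed
  have iter: "\<exists>g. sm g \<and> (deriv ^^ n) A = (\<lambda>x. g (binv x))" for n
  proof (induction n)
    case 0
    then show ?case using smA unfolding A_def by auto
  next
    case (Suc n)
    then obtain g where g: "sm g" "(deriv ^^ n) A = (\<lambda>x. g (binv x))" by blast
    obtain g' where g': "sm g'" "\<forall>w>0. (g has_real_derivative g' w) (at w)"
      using sm_deriv[OF g(1)] by blast
    have "(deriv ^^ Suc n) A = deriv (\<lambda>x. g (binv x))" using g by simp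
    also have "\<dots> = (\<lambda>x. g' (binv x) * inverse (B' (binv x)))"
      using comp_der[OF g'(2)] by (intro ext DERIV_imp_deriv)
    finally have "(deriv ^^ Suc n) A = (\<lambda>x. (\<lambda>w. g' w * inverse (B' w)) (binv x))" by simp
    moreover have "sm (\<lambda>w. g' w * inverse (B' w))"
      using g'(1) smB' B'pos by (intro sm.intros) (auto simp: less_irrefl dest: B'pos)
    ultimately show ?case by blast
  qed
  have smooth: "smooth_real A"
    unfolding smooth_real_def
  proof
    fix n
    obtain g where g: "sm g" "(deriv ^^ n) A = (\<lambda>x. g (binv x))" using iter by blast
    obtain g' where g': "\<forall>w>0. (g has_real_derivative g' w) (at w)"
      using sm_deriv[OF g(1)] by blast
    show "(deriv ^^ n) A differentiable_on UNIV" unfolding g(2)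
    proof (intro differentiable_at_imp_differentiable_on)
      fix x :: real
      show "(\<lambda>x. g (binv x)) differentiable at x"
        using comp_der[OF g', of x] by (metis differentiableI has_field_derivative_imp_has_derivative)
    qed
  qed
  have Adec: "\<forall>x y. x < y \<longrightarrow> A y < A x"
    unfolding A_def using binv_mono binv Amono by blast
  have Aconv: "convex_on UNIV A"
  proof (rule convex_on_realI[where f' = "\<lambda>x. A' (binv x) * inverse (B' (binv x))"])
    show "connected (UNIV :: real set)" by simp
    show "(A has_real_derivative A' (binv x) * inverse (B' (binv x))) (at x)" for x
      unfolding A_def using Ader by (intro comp_der) auto
    show "A' (binv x) * inverse (B' (binv x)) \<le> A' (binv y) * inverse (B' (binv y))"
      if "x \<le> y" for x y
    proof -
      have "binv x \<le> binv y" using binv_mono[of x y] that by (cases "x = y") auto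
      moreover have hq: "q1 * ?r2 \<le> q2 * ?r1"
        using mult_right_mono[OF h1, of q2] assms by (simp add: field_simps)
      ultimately have "A' (binv x) / B' (binv x) \<le> A' (binv y) / B' (binv y)"
        using R_mono[of ?r1 ?r2 c q1 q2 "binv x" "binv y"] r1 r2p assms binv[of x]
        unfolding A'_def B'_def by (simp add: mult.assoc)
      then show ?thesis by (simp add: divide_inverse)
    qed
  qed
  have Abij: "bij A"
  proof (rule bijI)
    show "inj A"
    proof (rule injI)
      fix x y assume "A x = A y"
      then show "x = y" using Adec by (metis less_irrefl linorder_cases)
    qed
    show "surj A"
    proof (rule surjI[where f = "\<lambda>y. ?B (SOME w. w > 0 \<and> ?Aa w = y)"])
      fix y
      have w: "(SOME w. w > 0 \<and> ?Aa w = y) > 0 \<and> ?Aa (SOME w. w > 0 \<and> ?Aa w = y) = y"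
        using someI_ex[OF Asurj[of y]] .
      then show "A (?B (SOME w. w > 0 \<and> ?Aa w = y)) = y" unfolding A_def using binvB by simp
    qed
  qed
  have graph: "{(?B \<omega>, ?Aa \<omega>) | \<omega>. \<omega> > 0} = {(x, A x) | x. True}"
  proof (intro set_eqI iffI)
    fix p assume "p \<in> {(?B \<omega>, ?Aa \<omega>) | \<omega>. \<omega> > 0}"
    then obtain w where "w > 0" "p = (?B w, ?Aa w)" by blast
    then show "p \<in> {(x, A x) | x. True}" unfolding A_def using binvB by auto
  next
    fix p assume "p \<in> {(x, A x) | x. True}"
    then obtain x where "p = (x, A x)" by blast
    then have "p = (?B (binv x), ?Aa (binv x))" unfolding A_def using binv by simp
    then show "p \<in> {(?B \<omega>, ?Aa \<omega>) | \<omega>. \<omega> > 0}" using binv by blast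
  qed
  have bnd1: "\<forall>b. b < 0 \<longrightarrow> A b \<le> (- b) powr (q2 / q1) * c powr (1 - q2 / q1)"
  proof (intro allI impI)
    fix b :: real assume "b < 0"
    define w where "w = binv b"
    have w: "w > 0" "?B w = b" using binv w_def by auto
    have "?Aa w \<le> (- ?B w) powr (q2 / q1) * c powr (1 - q2 / q1)"
      using bound_neg[of ?r1 ?r2 c q1 q2 w] w \<open>b < 0\<close> r1 r2p assms h1 h2
      unfolding curve_a_def curve_b_def by auto
    then show "A b \<le> (- b) powr (q2 / q1) * c powr (1 - q2 / q1)" unfolding A_def w_def[symmetric] w(2) .
  qed
  have bnd2: "\<forall>b. b \<ge> 0 \<longrightarrow> A b \<le> - (b powr (q1 / q2))"
  proof (intro allI impI)
    fix b :: real assume "b \<ge> 0"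
    define w where "w = binv b"
    have w: "w > 0" "?B w = b" using binv w_def by auto
    have "?Aa w \<le> - ((?B w) powr (q1 / q2))"
      using bound_pos[of ?r1 ?r2 c q1 q2 w] w \<open>b \<ge> 0\<close> r1 r2p assms h1 h2
      unfolding curve_a_def curve_b_def by auto
    then show "A b \<le> - (b powr (q1 / q2))" unfolding A_def w_def[symmetric] w(2) .
  qed
  show ?thesis using r1 r2 graph smooth Adec Aconv Abij bnd1 bnd2 by blast
qed

end
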